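(* Let $0\le\alpha<1$, $\mu\le\mu(\alpha)=\frac{(1-\alpha)^2}{4}$, $a_1,a_2\in\mathbb{R}$, and let $\alpha_1,\alpha_2$ be the eigenvalues of $A=\begin{pmatrix}0&a_1\\1&a_2\end{pmatrix}$ (labelled as in the context). Assume $$\lambda_{\alpha,\mu,n}-\lambda_{\alpha,\mu,l}\neq\alpha_1-\alpha_2\quad\text{for all }n,l\in\mathbb{N}^*,\ n\neq l.$$ Then the family $\{\lambda_{\alpha,\mu,n}+\alpha_2-\alpha_1:n\ge1\}\cup\{\lambda_{\alpha,\mu,n}:n\ge1\}$, arranged as a sequence $(\Lambda_n)_{n\ge1}$, satisfies, for some $\delta,\rho>0$: $\Re(\Lambda_n)\ge\delta|\Lambda_n|$ and $|\Lambda_n-\Lambda_m|\ge\rho|n-m|$ for all $n,m\ge1$, and $\sum_{n\ge1}\frac{1}{|\Lambda_n|}<+\infty$.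
   Context: $\nu(\alpha,\mu)=\frac{2}{2-\alpha}\sqrt{\mu(\alpha)-\mu}$, $(j_{\nu,n})_{n\ge1}$ is the increasing sequence of positive zeros of the Bessel function $J_\nu$, and $\lambda_{\alpha,\mu,n}=\left(\frac{2-\alpha}{2}\right)^2 j_{\nu(\alpha,\mu),n}^2$. Labelling of eigenvalues of $A$: if $a_2^2+4a_1>0$, $\alpha_1=\frac12(a_2-\sqrt{a_2^2+4a_1})$, $\alpha_2=\frac12(a_2+\sqrt{a_2^2+4a_1})$; if $a_2^2+4a_1<0$, $\alpha_1=\frac12(a_2+i\sqrt{-(a_2^2+4a_1)})$, $\alpha_2=\frac12(a_2-i\sqrt{-(a_2^2+4a_1)})$; if $a_2^2+4a_1=0$, $\alpha_1=\alpha_2=a_2/2$. *)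

theory Defs
  imports "HOL-Analysis.Analysis"
begin

text \<open>Bessel function of the first kind of real order nu (used for nu \<ge> 0, x > 0),
  defined by its power series.\<close>
definition besselJ :: "real \<Rightarrow> real \<Rightarrow> real" where
  "besselJ \<nu> x = (\<Sum>k. (-1) ^ k / (fact k * Gamma (real k + \<nu> + 1)) * (x / 2) powr (2 * real k + \<nu>))"

text \<open>The n-th (n \<ge> 1) positive zero of J_nu, in increasing order: the positive zero
  below which there are exactly n - 1 positive zeros.\<close>
definition bessel_zero :: "real \<Rightarrow> nat \<Rightarrow> real" where
  "bessel_zero \<nu> n = (THE x. 0 < x \<and> besselJ \<nu> x = 0 \<and>
      card {y. 0 < y \<and> y < x \<and> besselJ \<nu> y = 0} = n - 1)"

definition mu_crit :: "real \<Rightarrow> real" where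
  "mu_crit \<alpha> = (1 - \<alpha>)^2 / 4"

definition nu_am :: "real \<Rightarrow> real \<Rightarrow> real" where
  "nu_am \<alpha> \<mu> = 2 / (2 - \<alpha>) * sqrt (mu_crit \<alpha> - \<mu>)"

definition lam :: "real \<Rightarrow> real \<Rightarrow> nat \<Rightarrow> real" where
  "lam \<alpha> \<mu> n = ((2 - \<alpha>) / 2)^2 * (bessel_zero (nu_am \<alpha> \<mu>) n)^2"

text \<open>Eigenvalues of A = [[0, a1], [1, a2]], labelled as in the paper.\<close>
definition eig1 :: "real \<Rightarrow> real \<Rightarrow> complex" where
  "eig1 a1 a2 =
     (if a2^2 + 4*a1 > 0 then complex_of_real ((a2 - sqrt (a2^2 + 4*a1)) / 2)
      else if a2^2 + 4*a1 < 0 then Complex (a2/2) (sqrt (-(a2^2 + 4*a1)) / 2)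
      else complex_of_real (a2/2))"

definition eig2 :: "real \<Rightarrow> real \<Rightarrow> complex" where
  "eig2 a1 a2 =
     (if a2^2 + 4*a1 > 0 then complex_of_real ((a2 + sqrt (a2^2 + 4*a1)) / 2)
      else if a2^2 + 4*a1 < 0 then Complex (a2/2) (- sqrt (-(a2^2 + 4*a1)) / 2)
      else complex_of_real (a2/2))"

definition Lambda_set :: "real \<Rightarrow> real \<Rightarrow> real \<Rightarrow> real \<Rightarrow> complex set" where
  "Lambda_set \<alpha> \<mu> a1 a2 =
     {complex_of_real (lam \<alpha> \<mu> n) + eig2 a1 a2 - eig1 a1 a2 | n. n \<ge> 1}
     \<union> {complex_of_real (lam \<alpha> \<mu> n) | n. n \<ge> 1}"

end

theory Submission
  imports Defs "HOL-Complex_Analysis.Complex_Analysis"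
begin


definition bc :: "real \<Rightarrow> nat \<Rightarrow> real" where
  "bc \<nu> k = (-1)^k / (fact k * Gamma (real k + \<nu> + 1))"

lemma Gamma_ge_shift:
  assumes "\<nu> \<ge> 0" shows "Gamma (real k + \<nu> + 1) \<ge> Gamma (\<nu> + 1)"
proof (induction k)
  case 0 then show ?case by simp
next
  case (Suc k)
  have nz: "real k + \<nu> + 1 \<notin> \<int>\<^sub>\<le>\<^sub>0" using assms nonpos_Ints_nonpos by force
  have "Gamma (real (Suc k) + \<nu> + 1) = (real k + \<nu> + 1) * Gamma (real k + \<nu> + 1)"
    using Gamma_plus1[OF nz] by (simp add: algebra_simps)
  moreover have "Gamma (real k + \<nu> + 1) > 0" using assms by simp
  ultimately show ?case using Suc assms
    by (smt (verit, best) mult_le_cancel_right1 of_nat_0_le_iff)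
qed

lemma bc_bound:
  assumes "\<nu> \<ge> 0" shows "\<bar>bc \<nu> k\<bar> \<le> inverse (Gamma (\<nu> + 1)) * inverse (fact k)"
proof -
  have g0: "Gamma (\<nu> + 1) > 0" using assms by simp
  have g1: "Gamma (real k + \<nu> + 1) \<ge> Gamma (\<nu> + 1)" using Gamma_ge_shift assms by blast
  have "\<bar>bc \<nu> k\<bar> = 1 / (fact k * Gamma (real k + \<nu> + 1))"
    using g0 g1 by (simp add: bc_def abs_mult abs_divide)
  also have "\<dots> \<le> 1 / (fact k * Gamma (\<nu> + 1))"
    using g0 g1 by (intro divide_left_mono mult_left_mono) auto
  finally show ?thesis by (simp add: field_simps)
qed

lemma bc_summable:
  fixes z :: "'a::{real_normed_field,banach}"
  assumes "\<nu> \<ge> 0" shows "summable (\<lambda>k. of_real (bc \<nu> k) * z ^ k)"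
proof (rule summable_norm_cancel)
  have s: "summable (\<lambda>k. inverse (Gamma (\<nu> + 1)) * (inverse (fact k) * norm z ^ k))"
    using summable_exp[of "norm z"] by (rule summable_mult)
  show "summable (\<lambda>k. norm (of_real (bc \<nu> k) * z ^ k))"
  proof (rule summable_comparison_test'[OF s])
    fix k assume "k \<ge> (0::nat)"
    have "norm (of_real (bc \<nu> k) * z ^ k) = \<bar>bc \<nu> k\<bar> * norm z ^ k"
      by (simp add: norm_mult norm_power)
    also have "\<dots> \<le> inverse (Gamma (\<nu> + 1)) * inverse (fact k) * norm z ^ k"
      using bc_bound[OF assms] by (intro mult_right_mono) auto
    finally show "norm (norm (of_real (bc \<nu> k) * z ^ k)) \<le> inverse (Gamma (\<nu> + 1)) * (inverse (fact k) * norm z ^ k)"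
      by (simp add: mult.assoc)
  qed
qed

lemma bc_summable_real:
  assumes "\<nu> \<ge> 0" shows "summable (\<lambda>k. bc \<nu> k * (y::real) ^ k)"
  using bc_summable[OF assms, of y] by simp

lemma bc_rec:
  assumes "\<nu> \<ge> 0" shows "bc \<nu> (Suc m) * (real m + 1) * (real m + \<nu> + 1) = - bc \<nu> m"
proof -
  have nz: "real m + \<nu> + 1 \<notin> \<int>\<^sub>\<le>\<^sub>0" using assms nonpos_Ints_nonpos by force
  have G: "Gamma (real (Suc m) + \<nu> + 1) = (real m + \<nu> + 1) * Gamma (real m + \<nu> + 1)"
    using Gamma_plus1[OF nz] by (simp add: algebra_simps)
  have g0: "Gamma (real m + \<nu> + 1) > 0" "real m + \<nu> + 1 > 0" using assms by auto
  have f: "fact (Suc m) = (real m + 1) * fact m" by (simp add: algebra_simps)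
  have "bc \<nu> (Suc m) = - ((-1)^m / (fact m * Gamma (real m + \<nu> + 1))) / ((real m + 1) * (real m + \<nu> + 1))"
    unfolding bc_def G f by (simp add: field_simps)
  moreover have P: "(real m + 1) * (real m + \<nu> + 1) \<noteq> 0" using g0 by simp
  ultimately have "bc \<nu> (Suc m) * ((real m + 1) * (real m + \<nu> + 1)) = - ((-1)^m / (fact m * Gamma (real m + \<nu> + 1)))"
    by simp
  then show ?thesis unfolding bc_def[of \<nu> m] by (simp add: mult.assoc)
qed

definition bg :: "real \<Rightarrow> real \<Rightarrow> real" where "bg \<nu> y = (\<Sum>k. bc \<nu> k * y ^ k)"
definition bg1 :: "real \<Rightarrow> real \<Rightarrow> real" where "bg1 \<nu> y = (\<Sum>k. diffs (bc \<nu>) k * y ^ k)"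
definition bg2 :: "real \<Rightarrow> real \<Rightarrow> real" where "bg2 \<nu> y = (\<Sum>k. diffs (diffs (bc \<nu>)) k * y ^ k)"

lemma bg_deriv:
  assumes "\<nu> \<ge> 0"
  shows "(bg \<nu> has_real_derivative bg1 \<nu> y) (at y)"
    and "(bg1 \<nu> has_real_derivative bg2 \<nu> y) (at y)"
proof -
  have s0: "\<And>y. summable (\<lambda>k. bc \<nu> k * (y::real) ^ k)" using bc_summable_real[OF assms] .
  have s1: "\<And>y. summable (\<lambda>k. diffs (bc \<nu>) k * (y::real) ^ k)" by (rule termdiff_converges_all[OF s0])
  show "(bg \<nu> has_real_derivative bg1 \<nu> y) (at y)"
    unfolding bg_def[abs_def] bg1_def using termdiffs_strong_converges_everywhere[OF s0] by blast
  show "(bg1 \<nu> has_real_derivative bg2 \<nu> y) (at y)"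
    unfolding bg2_def bg1_def[abs_def] using termdiffs_strong_converges_everywhere[OF s1] by blast
qed

lemma bg_ode:
  assumes "\<nu> \<ge> 0"
  shows "y * bg2 \<nu> y + (\<nu> + 1) * bg1 \<nu> y + bg \<nu> y = 0"
proof -
  define c where "c = bc \<nu>"
  define d1 where "d1 = diffs c"
  define d2 where "d2 = diffs d1"
  have s0: "\<And>y. summable (\<lambda>k. c k * (y::real) ^ k)" using bc_summable_real[OF assms] c_def by simp
  have s1: "\<And>y. summable (\<lambda>k. d1 k * (y::real) ^ k)" unfolding d1_def by (rule termdiff_converges_all[OF s0])
  have s2: "\<And>y. summable (\<lambda>k. d2 k * (y::real) ^ k)" unfolding d2_def by (rule termdiff_converges_all[OF s1])
  define E where "E m = (if m = 0 then 0 else d2 (m - 1))" for m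
  have "(\<lambda>n. y * (d2 n * y ^ n)) sums (y * bg2 \<nu> y)"
    using sums_mult[OF summable_sums[OF s2]] by (simp add: bg2_def d2_def d1_def c_def)
  then have "(\<lambda>n. E (Suc n) * y ^ (Suc n)) sums (y * bg2 \<nu> y)"
    by (simp add: E_def mult.assoc mult.left_commute)
  then have a: "(\<lambda>m. E m * y ^ m) sums (y * bg2 \<nu> y)"
    using sums_Suc_iff[of "\<lambda>m. E m * y ^ m"] by (simp add: E_def)
  have b: "(\<lambda>m. (\<nu> + 1) * (d1 m * y ^ m)) sums ((\<nu> + 1) * bg1 \<nu> y)"
    using sums_mult[OF summable_sums[OF s1]] by (simp add: bg1_def d1_def c_def)
  have c: "(\<lambda>m. c m * y ^ m) sums (bg \<nu> y)"
    using summable_sums[OF s0] by (simp add: bg_def c_def)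
  have coef: "E m + (\<nu> + 1) * d1 m + c m = 0" for m
  proof (cases m)
    case 0
    then show ?thesis using bc_rec[OF assms, of 0]
      by (simp add: E_def d1_def diffs_def c_def algebra_simps)
  next
    case (Suc k)
    have r: "c (Suc (Suc k)) * (real (Suc k) + 1) * (real (Suc k) + \<nu> + 1) = - c (Suc k)"
      using bc_rec[OF assms, of "Suc k"] c_def by simp
    show ?thesis using Suc r
      by (simp add: E_def d2_def d1_def diffs_def algebra_simps)
  qed
  have "(\<lambda>m. E m * y ^ m + (\<nu> + 1) * (d1 m * y ^ m) + c m * y ^ m) sums
           (y * bg2 \<nu> y + (\<nu> + 1) * bg1 \<nu> y + bg \<nu> y)"
    by (intro sums_add a b c)
  moreover have "(\<lambda>m. E m * y ^ m + (\<nu> + 1) * (d1 m * y ^ m) + c m * y ^ m) = (\<lambda>m. 0)"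
  proof
    fix m
    have "E m * y ^ m + (\<nu> + 1) * (d1 m * y ^ m) + c m * y ^ m = (E m + (\<nu> + 1) * d1 m + c m) * y ^ m"
      by (simp add: algebra_simps)
    then show "E m * y ^ m + (\<nu> + 1) * (d1 m * y ^ m) + c m * y ^ m = 0" using coef by simp
  qed
  ultimately show ?thesis using sums_unique2 sums_zero by metis
qed


lemma besselJ_bg:
  assumes "\<nu> \<ge> 0" "x > 0"
  shows "besselJ \<nu> x = (x/2) powr \<nu> * bg \<nu> (x^2/4)"
proof -
  have e: "(x/2) powr (2 * real k + \<nu>) = (x/2) powr \<nu> * (bc \<nu> k * (x^2/4)^k) / bc \<nu> k" if "bc \<nu> k \<noteq> 0" for k
  proof -
    have a: "(x/2) powr (2 * real k) = (x/2)^(2*k)" using powr_realpow[of "x/2" "2*k"] assms by simp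
    have b: "(x/2)^(2*k) = (x^2/4)^k" by (simp add: power_mult power_divide)
    have "(x/2) powr (2 * real k + \<nu>) = (x/2) powr (2 * real k) * (x/2) powr \<nu>"
      by (simp add: powr_add)
    also have "\<dots> = (x^2/4)^k * (x/2) powr \<nu>"
      using a b by simp
    finally show ?thesis using that by simp
  qed
  have t: "bc \<nu> k * (x/2) powr (2 * real k + \<nu>) = (x/2) powr \<nu> * (bc \<nu> k * (x^2/4)^k)" for k
    by (cases "bc \<nu> k = 0") (simp_all add: e)
  have "besselJ \<nu> x = (\<Sum>k. bc \<nu> k * (x/2) powr (2 * real k + \<nu>))"
    unfolding besselJ_def bc_def by simp
  also have "\<dots> = (\<Sum>k. (x/2) powr \<nu> * (bc \<nu> k * (x^2/4)^k))" by (simp only: t)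
  also have "\<dots> = (x/2) powr \<nu> * bg \<nu> (x^2/4)"
    unfolding bg_def by (rule suminf_mult[OF bc_summable_real[OF assms(1)]])
  finally show ?thesis .
qed

lemma besselJ_zero_iff:
  assumes "\<nu> \<ge> 0" "x > 0"
  shows "besselJ \<nu> x = 0 \<longleftrightarrow> bg \<nu> (x^2/4) = 0"
  using besselJ_bg[OF assms] assms by simp

lemma sq4: "((\<lambda>x. x^2/4) has_real_derivative (x::real)/2) (at x)"
  by (auto intro!: derivative_eq_intros)

definition bQ :: "real \<Rightarrow> real \<Rightarrow> real" where "bQ \<nu> x = 1 - (\<nu>^2 - 1/4) / x^2"
definition bu :: "real \<Rightarrow> real \<Rightarrow> real" where "bu \<nu> x = x powr (\<nu> + 1/2) * bg \<nu> (x^2/4)"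
definition bu1 :: "real \<Rightarrow> real \<Rightarrow> real" where
  "bu1 \<nu> x = (\<nu> + 1/2) * x powr (\<nu> + 1/2 - 1) * bg \<nu> (x^2/4) + x powr (\<nu> + 1/2) * (bg1 \<nu> (x^2/4) * (x/2))"

lemma bu_zero_iff:
  assumes "\<nu> \<ge> 0" "x > 0"
  shows "bu \<nu> x = 0 \<longleftrightarrow> besselJ \<nu> x = 0"
  using besselJ_zero_iff[OF assms] assms by (simp add: bu_def)

lemma bu_deriv:
  assumes "\<nu> \<ge> 0" "x > 0"
  shows "(bu \<nu> has_real_derivative bu1 \<nu> x) (at x)"
proof -
  have d: "((\<lambda>x. bg \<nu> (x^2/4)) has_real_derivative bg1 \<nu> (x^2/4) * (x/2)) (at x)"
    using DERIV_chain2[OF bg_deriv(1)[OF assms(1)] sq4] by simp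
  show ?thesis unfolding bu_def[abs_def] bu1_def[of \<nu> x]
    by (rule derivative_eq_intros has_real_derivative_powr[OF assms(2)] d refl | simp)+
qed

lemma bu1_deriv:
  assumes "\<nu> \<ge> 0" "x > 0"
  shows "(bu1 \<nu> has_real_derivative - (bQ \<nu> x * bu \<nu> x)) (at x)"
proof -
  define p where "p = \<nu> + 1/2"
  define y where "y = x^2/4"
  have d0: "((\<lambda>x. bg \<nu> (x^2/4)) has_real_derivative bg1 \<nu> (x^2/4) * (x/2)) (at x)"
    using DERIV_chain2[OF bg_deriv(1)[OF assms(1)] sq4] by simp
  have d1: "((\<lambda>x. bg1 \<nu> (x^2/4)) has_real_derivative bg2 \<nu> (x^2/4) * (x/2)) (at x)"
    using DERIV_chain2[OF bg_deriv(2)[OF assms(1)] sq4] by simp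
  have D: "(bu1 \<nu> has_real_derivative
      (p * ((p - 1) * x powr (p - 1 - 1)) * bg \<nu> y + p * x powr (p - 1) * (bg1 \<nu> y * (x/2))
       + (p * x powr (p - 1) * (bg1 \<nu> y * (x/2)) + x powr p * (bg2 \<nu> y * (x/2) * (x/2) + bg1 \<nu> y * (1/2))))) (at x)"
    unfolding bu1_def[abs_def] p_def[symmetric] y_def
    apply (rule derivative_eq_intros has_real_derivative_powr[OF assms(2)] d0 d1 refl | simp add: assms(2))+
    done
  have ode: "y * bg2 \<nu> y = - ((\<nu> + 1) * bg1 \<nu> y) - bg \<nu> y" using bg_ode[OF assms(1), of y] by linarith
  have P1: "x powr (p - 1) = x powr p / x" using assms by (simp add: powr_diff)
  have P2: "x powr (p - 1 - 1) = x powr p / x^2" using assms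
    by (simp add: powr_diff power2_eq_square)
  have yx: "x/2 * (x/2) = y" by (simp add: y_def power2_eq_square)
  have "p * ((p - 1) * x powr (p - 1 - 1)) * bg \<nu> y + p * x powr (p - 1) * (bg1 \<nu> y * (x/2))
       + (p * x powr (p - 1) * (bg1 \<nu> y * (x/2)) + x powr p * (bg2 \<nu> y * (x/2) * (x/2) + bg1 \<nu> y * (1/2)))
     = p * (p - 1) / x^2 * x powr p * bg \<nu> y + p * x powr p * bg1 \<nu> y
       + x powr p * (y * bg2 \<nu> y + bg1 \<nu> y * (1/2))"
    unfolding P1 P2 using assms yx[symmetric] by (simp add: field_simps power2_eq_square)
  also have "\<dots> = - (bQ \<nu> x * bu \<nu> x)"
    unfolding ode bQ_def bu_def p_def[symmetric] y_def[symmetric] using assms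
    by (simp add: p_def field_simps power2_eq_square)
  finally show ?thesis using D by simp
qed


definition bG :: "real \<Rightarrow> complex \<Rightarrow> complex" where
  "bG \<nu> z = (\<Sum>k. of_real (bc \<nu> k) * z ^ k)"

lemma bG_holo:
  assumes "\<nu> \<ge> 0" shows "(\<lambda>z. bG \<nu> (z^2/4)) holomorphic_on UNIV"
proof -
  have "bG \<nu> field_differentiable (at z)" for z
    unfolding bG_def[abs_def] field_differentiable_def
    using termdiffs_strong_converges_everywhere[OF bc_summable[OF assms]] by blast
  then have "bG \<nu> holomorphic_on UNIV"
    by (simp add: holomorphic_on_def field_differentiable_at_within)
  moreover have "(\<lambda>z::complex. z^2/4) holomorphic_on UNIV" by (intro holomorphic_intros) auto
  ultimately have "(bG \<nu> \<circ> (\<lambda>z::complex. z^2/4)) holomorphic_on UNIV"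
    using holomorphic_on_compose holomorphic_on_subset subset_UNIV by metis
  then show ?thesis by (simp add: o_def)
qed

lemma bG_real:
  assumes "\<nu> \<ge> 0" shows "bG \<nu> (of_real y) = of_real (bg \<nu> y)"
proof -
  have "bG \<nu> (of_real y) = (\<Sum>k. of_real (bc \<nu> k * y ^ k))"
    unfolding bG_def by simp
  also have "\<dots> = of_real (bg \<nu> y)"
    unfolding bg_def by (rule suminf_of_real[OF bc_summable_real[OF assms], symmetric])
  finally show ?thesis .
qed

lemma bG_0:
  assumes "\<nu> \<ge> 0" shows "bG \<nu> 0 \<noteq> 0"
proof -
  have "bG \<nu> 0 = of_real (bc \<nu> 0)" unfolding bG_def by (rule powser_zero)
  moreover have "bc \<nu> 0 \<noteq> 0"
  proof -
    have "\<nu> + 1 > 0" using assms by simp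
    then have "Gamma (\<nu> + 1) > 0" by simp
    then show ?thesis by (simp add: bc_def)
  qed
  ultimately show ?thesis by simp
qed

lemma bessel_zeros_finite:
  assumes "\<nu> \<ge> 0"
  shows "finite {x. 0 < x \<and> x \<le> d \<and> besselJ \<nu> x = 0}"
proof (rule ccontr)
  define T where "T = {x. 0 < x \<and> x \<le> d \<and> besselJ \<nu> x = 0}"
  assume "infinite {x. 0 < x \<and> x \<le> d \<and> besselJ \<nu> x = 0}"
  then have inf: "infinite (complex_of_real ` T)"
    unfolding T_def by (subst finite_image_iff) (auto simp: inj_on_def)
  have bdd: "bounded (complex_of_real ` T)"
  proof -
    have "complex_of_real ` T \<subseteq> cball 0 \<bar>d\<bar>" unfolding T_def by (auto simp: dist_norm)
    then show ?thesis using bounded_cball bounded_subset by blast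
  qed
  obtain \<xi> where xi: "\<xi> islimpt (complex_of_real ` T)"
    using bounded_infinite_imp_islimpt[OF order_refl bdd inf] by blast
  have z: "bG \<nu> (z^2/4) = 0" if zT: "z \<in> complex_of_real ` T" for z
  proof -
    obtain x where x: "x \<in> T" "z = of_real x" using zT by blast
    have "bg \<nu> (x^2/4) = 0" using x(1) besselJ_zero_iff[OF assms] unfolding T_def by auto
    then show ?thesis using x(2) bG_real[OF assms, of "x^2/4"] by simp
  qed
  have "bG \<nu> ((0::complex)^2/4) = 0"
    by (rule analytic_continuation[OF bG_holo[OF assms] open_UNIV connected_UNIV subset_UNIV UNIV_I xi z UNIV_I])
  then show False using bG_0[OF assms] by simp
qed


lemma ivt_zero:
  fixes u :: "real \<Rightarrow> real"
  assumes "continuous_on {p..q} u" "p \<le> q" "u p * u q \<le> 0"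
  shows "\<exists>y. p \<le> y \<and> y \<le> q \<and> u y = 0"
proof (cases "u p \<le> 0")
  case True
  then have "u q \<ge> 0 \<or> u p = 0" using assms(3) by (auto simp: mult_le_0_iff)
  then show ?thesis
  proof
    assume "u q \<ge> 0" then show ?thesis using IVT'[of u p 0 q] True assms(1,2) by blast
  next
    assume "u p = 0" then show ?thesis using assms(2) by blast
  qed
next
  case False
  then have "u q \<le> 0" using assms(3) by (auto simp: mult_le_0_iff)
  then show ?thesis using IVT2'[of u q 0 p] False assms(1,2) by fastforce
qed

lemma sign_same:
  fixes u :: "real \<Rightarrow> real"
  assumes cont: "continuous_on {a..b} u" and x: "a \<le> x" "x \<le> b" and c: "a \<le> c" "c \<le> b"
    and nz: "\<And>y. min x c \<le> y \<Longrightarrow> y \<le> max x c \<Longrightarrow> u y \<noteq> 0"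
  shows "u x * u c > 0"
proof (rule ccontr)
  assume "\<not> u x * u c > 0"
  then have le: "u (min x c) * u (max x c) \<le> 0" by (cases "x \<le> c") (auto simp: min_def max_def mult.commute)
  have sub: "{min x c..max x c} \<subseteq> {a..b}" using x c by auto
  have "continuous_on {min x c..max x c} u"
    using continuous_on_subset[OF cont sub] .
  moreover have "min x c \<le> max x c" by simp
  ultimately obtain y where "min x c \<le> y" "y \<le> max x c" "u y = 0"
    using ivt_zero[of "min x c" "max x c" u] le by blast
  then show False using nz by blast
qed

lemma sturm_gap_pos:
  fixes u u1 Q :: "real \<Rightarrow> real"
  assumes ab: "a < b"
    and du: "\<And>x. a \<le> x \<Longrightarrow> x \<le> b \<Longrightarrow> (u has_real_derivative u1 x) (at x)"
    and du1: "\<And>x. a \<le> x \<Longrightarrow> x \<le> b \<Longrightarrow> (u1 has_real_derivative - (Q x * u x)) (at x)"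
    and ua: "u a = 0" and ub: "u b = 0"
    and pos: "\<And>x. a < x \<Longrightarrow> x < b \<Longrightarrow> u x > 0"
    and QM: "\<And>x. a \<le> x \<Longrightarrow> x \<le> b \<Longrightarrow> Q x < M" and M: "M > 0"
  shows "b - a \<ge> pi / sqrt M"
proof (rule ccontr)
  assume "\<not> b - a \<ge> pi / sqrt M"
  then have lt: "b - a < pi / sqrt M" by simp
  define k where "k = sqrt M"
  have k: "k > 0" "k * k = M" using M by (auto simp: k_def)
  have kba: "k * (b - a) < pi" using lt k by (simp add: k_def field_simps)
  define W where "W x = u1 x * sin (k * (x - a)) - u x * (k * cos (k * (x - a)))" for x
  have dW: "(W has_real_derivative (M - Q x) * u x * sin (k * (x - a))) (at x)" if "a \<le> x" "x \<le> b" for x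
  proof -
    have "(W has_real_derivative
        (- (Q x * u x)) * sin (k * (x - a)) + u1 x * (cos (k * (x - a)) * k)
        - (u1 x * (k * cos (k * (x - a))) + u x * (k * (- sin (k * (x - a)) * k)))) (at x)"
      unfolding W_def[abs_def]
      by (rule derivative_eq_intros du du1 that refl | simp)+
    moreover have "(- (Q x * u x)) * sin (k * (x - a)) + u1 x * (cos (k * (x - a)) * k)
        - (u1 x * (k * cos (k * (x - a))) + u x * (k * (- sin (k * (x - a)) * k)))
        = (M - Q x) * u x * sin (k * (x - a))"
      using k by (simp add: algebra_simps flip: k(2))
    ultimately show ?thesis by simp
  qed
  obtain z where z: "a < z" "z < b" "W b - W a = (b - a) * ((M - Q z) * u z * sin (k * (z - a)))"
    using MVT2[OF ab, of W "\<lambda>x. (M - Q x) * u x * sin (k * (x - a))"] dW by auto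
  have "k * (z - a) < k * (b - a)" using z k by (intro mult_strict_left_mono) auto
  then have "k * (z - a) < pi" using kba by linarith
  moreover have "k * (z - a) > 0" using z k by simp
  ultimately have "sin (k * (z - a)) > 0" by (intro sin_gt_zero)
  moreover have "M - Q z > 0" "u z > 0" using QM[of z] pos[of z] z by auto
  ultimately have "W b - W a > 0" using z ab by simp
  moreover have "W a = 0" unfolding W_def using ua by simp
  ultimately have Wb: "W b > 0" by simp
  have svb: "sin (k * (b - a)) > 0" using k kba ab by (intro sin_gt_zero) auto
  have "u1 b \<le> 0"
  proof (rule ccontr)
    assume "\<not> u1 b \<le> 0"
    then obtain d where d: "d > 0" "\<And>h. h > 0 \<Longrightarrow> h < d \<Longrightarrow> u (b - h) < u b"
      using DERIV_pos_inc_left[OF du[of b]] ab by force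
    define h where "h = min (d/2) ((b - a)/2)"
    have h1: "h \<le> (b - a)/2" "h \<le> d/2" unfolding h_def by (rule min.cobounded2, rule min.cobounded1)
    have "h > 0" using d ab by (simp add: h_def)
    have "h < d" using h1 d by linarith
    moreover have "a < b - h" using h1(1) ab by (simp add: field_simps)
    moreover have "b - h < b" using \<open>h > 0\<close> by linarith
    ultimately have "h > 0" "h < d" "a < b - h" "b - h < b" using \<open>h > 0\<close> by auto
    then show False using d(2)[of h] pos[of "b - h"] ub by auto
  qed
  then have "W b \<le> 0" unfolding W_def using ub svb by (simp add: mult_nonpos_nonneg)
  then show False using Wb by simp
qed

lemma sturm_gap:
  fixes u u1 Q :: "real \<Rightarrow> real"
  assumes ab: "a < b"
    and du: "\<And>x. a \<le> x \<Longrightarrow> x \<le> b \<Longrightarrow> (u has_real_derivative u1 x) (at x)"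
    and du1: "\<And>x. a \<le> x \<Longrightarrow> x \<le> b \<Longrightarrow> (u1 has_real_derivative - (Q x * u x)) (at x)"
    and ua: "u a = 0" and ub: "u b = 0"
    and nz: "\<And>x. a < x \<Longrightarrow> x < b \<Longrightarrow> u x \<noteq> 0"
    and QM: "\<And>x. a \<le> x \<Longrightarrow> x \<le> b \<Longrightarrow> Q x < M" and M: "M > 0"
  shows "b - a \<ge> pi / sqrt M"
proof -
  have cont: "continuous_on {a..b} u"
    using du by (intro DERIV_continuous_on[where D = u1]) (auto intro: has_field_derivative_at_within)
  define c where "c = (a + b) / 2"
  have c: "a < c" "c < b" using ab by (auto simp: c_def)
  have same: "u x * u c > 0" if "a < x" "x < b" for x
  proof (rule sign_same[OF cont])
    show "a \<le> x" "x \<le> b" "a \<le> c" "c \<le> b" using that c by auto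
    fix y assume "min x c \<le> y" "y \<le> max x c"
    then have "a < y" "y < b" using that c by (auto simp: min_def max_def split: if_splits)
    then show "u y \<noteq> 0" by (rule nz)
  qed
  show ?thesis
  proof (cases "u c > 0")
    case True
    have "u x > 0" if "a < x" "x < b" for x
      using same[OF that] True by (simp add: zero_less_mult_iff)
    then show ?thesis using sturm_gap_pos[OF ab du du1 ua ub _ QM M] by blast
  next
    case False
    have p: "- u x > 0" if "a < x" "x < b" for x
      using same[OF that] False by (simp add: zero_less_mult_iff)
    have d1: "((\<lambda>x. - u x) has_real_derivative - u1 x) (at x)" if "a \<le> x" "x \<le> b" for x
      using du[OF that] by (rule DERIV_minus)
    have d2: "((\<lambda>x. - u1 x) has_real_derivative - (Q x * (- u x))) (at x)" if "a \<le> x" "x \<le> b" for x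
      using DERIV_minus[OF du1[OF that]] by simp
    have "- u a = 0" "- u b = 0" using ua ub by simp_all
    from sturm_gap_pos[OF ab d1 d2 this p QM M] show ?thesis .
  qed
qed

lemma sturm_zero_pos:
  fixes u u1 Q :: "real \<Rightarrow> real"
  assumes m: "m > 0" and L: "L = pi / sqrt m"
    and du: "\<And>x. A \<le> x \<Longrightarrow> x \<le> A + L \<Longrightarrow> (u has_real_derivative u1 x) (at x)"
    and du1: "\<And>x. A \<le> x \<Longrightarrow> x \<le> A + L \<Longrightarrow> (u1 has_real_derivative - (Q x * u x)) (at x)"
    and Qm: "\<And>x. A \<le> x \<Longrightarrow> x \<le> A + L \<Longrightarrow> Q x \<ge> m"
    and pos: "\<And>x. A \<le> x \<Longrightarrow> x \<le> A + L \<Longrightarrow> u x > 0"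
  shows False
proof -
  define k where "k = sqrt m"
  have k: "k > 0" "k * k = m" using m by (auto simp: k_def)
  have kL: "k * L = pi" using L k by (simp add: k_def)
  have L0: "L > 0" using L m by simp
  define W where "W x = u1 x * sin (k * (x - A)) - u x * (k * cos (k * (x - A)))" for x
  have dW: "(W has_real_derivative (m - Q x) * u x * sin (k * (x - A))) (at x)" if "A \<le> x" "x \<le> A + L" for x
  proof -
    have "(W has_real_derivative
        (- (Q x * u x)) * sin (k * (x - A)) + u1 x * (cos (k * (x - A)) * k)
        - (u1 x * (k * cos (k * (x - A))) + u x * (k * (- sin (k * (x - A)) * k)))) (at x)"
      unfolding W_def[abs_def]
      by (rule derivative_eq_intros du du1 that refl | simp)+
    moreover have "(- (Q x * u x)) * sin (k * (x - A)) + u1 x * (cos (k * (x - A)) * k)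
        - (u1 x * (k * cos (k * (x - A))) + u x * (k * (- sin (k * (x - A)) * k)))
        = (m - Q x) * u x * sin (k * (x - A))"
      using k by (simp add: algebra_simps flip: k(2))
    ultimately show ?thesis by simp
  qed
  obtain z where z: "A < z" "z < A + L" "W (A + L) - W A = L * ((m - Q z) * u z * sin (k * (z - A)))"
    using MVT2[of A "A + L" W "\<lambda>x. (m - Q x) * u x * sin (k * (x - A))"] dW L0 by auto
  have "sin (k * (z - A)) \<ge> 0"
  proof (rule sin_ge_zero)
    show "0 \<le> k * (z - A)" using z k by simp
    have "k * (z - A) \<le> k * L" using z k by (intro mult_left_mono) auto
    then show "k * (z - A) \<le> pi" using kL by simp
  qed
  moreover have "m - Q z \<le> 0" "u z > 0" using Qm[of z] pos[of z] z by auto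
  ultimately have "(m - Q z) * u z * sin (k * (z - A)) \<le> 0"
    by (intro mult_nonpos_nonneg) (auto intro: mult_nonpos_nonneg)
  then have "W (A + L) - W A \<le> 0" using z L0 by (simp add: mult_nonneg_nonpos)
  moreover have "W A = - u A * k" unfolding W_def by simp
  moreover have "W (A + L) = u (A + L) * k" unfolding W_def using kL by simp
  moreover have "u A > 0" "u (A + L) > 0" using pos L0 by auto
  ultimately have "(u (A + L) + u A) * k \<le> 0" by (simp add: algebra_simps)
  moreover have "(u (A + L) + u A) * k > 0" using \<open>u A > 0\<close> \<open>u (A + L) > 0\<close> k by simp
  ultimately show False by simp
qed

lemma sturm_zero:
  fixes u u1 Q :: "real \<Rightarrow> real"
  assumes m: "m > 0" and L: "L = pi / sqrt m"
    and du: "\<And>x. A \<le> x \<Longrightarrow> x \<le> A + L \<Longrightarrow> (u has_real_derivative u1 x) (at x)"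
    and du1: "\<And>x. A \<le> x \<Longrightarrow> x \<le> A + L \<Longrightarrow> (u1 has_real_derivative - (Q x * u x)) (at x)"
    and Qm: "\<And>x. A \<le> x \<Longrightarrow> x \<le> A + L \<Longrightarrow> Q x \<ge> m"
  shows "\<exists>x. A \<le> x \<and> x \<le> A + L \<and> u x = 0"
proof (rule ccontr)
  assume nz0: "\<not> (\<exists>x. A \<le> x \<and> x \<le> A + L \<and> u x = 0)"
  have L0: "L > 0" using L m by simp
  have cont: "continuous_on {A..A+L} u"
    using du by (intro DERIV_continuous_on[where D = u1]) (auto intro: has_field_derivative_at_within)
  have same: "u x * u A > 0" if "A \<le> x" "x \<le> A + L" for x
  proof (rule sign_same[OF cont])
    show "A \<le> x" "x \<le> A + L" "A \<le> A" "A \<le> A + L" using that L0 by auto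
    fix y assume "min x A \<le> y" "y \<le> max x A"
    then have "A \<le> y" "y \<le> A + L" using that by (auto simp: min_def max_def split: if_splits)
    then show "u y \<noteq> 0" using nz0 by blast
  qed
  show False
  proof (cases "u A > 0")
    case True
    have "u x > 0" if "A \<le> x" "x \<le> A + L" for x
      using same[OF that] True by (simp add: zero_less_mult_iff)
    then show False using sturm_zero_pos[OF m L du du1 Qm] by blast
  next
    case False
    have p: "- u x > 0" if "A \<le> x" "x \<le> A + L" for x
      using same[OF that] False by (simp add: zero_less_mult_iff)
    have d1: "((\<lambda>x. - u x) has_real_derivative - u1 x) (at x)" if "A \<le> x" "x \<le> A + L" for x
      using du[OF that] by (rule DERIV_minus)
    have d2: "((\<lambda>x. - u1 x) has_real_derivative - (Q x * (- u x))) (at x)" if "A \<le> x" "x \<le> A + L" for x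
      using DERIV_minus[OF du1[OF that]] by simp
    from sturm_zero_pos[OF m L d1 d2 Qm p] show False .
  qed
qed


definition enum_real :: "real set \<Rightarrow> nat \<Rightarrow> real" where
  "enum_real S n = (THE x. x \<in> S \<and> card {y\<in>S. y < x} = n)"

lemma enum_real_props:
  fixes S :: "real set"
  assumes fin: "\<And>d. finite {x\<in>S. x \<le> d}" and unb: "\<And>d. \<exists>x\<in>S. x > d"
  shows "enum_real S n \<in> S" "card {y\<in>S. y < enum_real S n} = n"
    and "strict_mono (enum_real S)"
    and "\<And>x. x \<in> S \<Longrightarrow> \<exists>n. x = enum_real S n"
    and "\<And>y. y \<in> S \<Longrightarrow> enum_real S n < y \<Longrightarrow> enum_real S (Suc n) \<le> y"
proof -
  define cnt where "cnt x = card {y\<in>S. y < x}" for x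
  have finlt: "finite {y\<in>S. y < x}" for x
    by (rule finite_subset[OF _ fin[of x]]) auto
  have mono: "cnt x1 < cnt x2" if "x1 \<in> S" "x2 \<in> S" "x1 < x2" for x1 x2
  proof -
    have "{y\<in>S. y < x1} \<subset> {y\<in>S. y < x2}" using that by auto
    then show ?thesis unfolding cnt_def by (rule psubset_card_mono[OF finlt])
  qed
  have inj: "x1 = x2" if "x1 \<in> S" "x2 \<in> S" "cnt x1 = cnt x2" for x1 x2
    using mono[of x1 x2] mono[of x2 x1] that by (cases x1 x2 rule: linorder_cases) auto
  have ex: "\<exists>x\<in>S. cnt x = n" for n
  proof (induction n)
    case 0
    obtain s where s: "s \<in> S" using unb by blast
    define F where "F = {x\<in>S. x \<le> s}"
    have "finite F" "F \<noteq> {}" using fin s by (auto simp: F_def)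
    define m where "m = Min F"
    have m: "m \<in> F" "\<And>x. x \<in> F \<Longrightarrow> m \<le> x" using \<open>finite F\<close> \<open>F \<noteq> {}\<close> by (auto simp: m_def)
    have "{y\<in>S. y < m} = {}"
    proof (rule ccontr)
      assume "{y\<in>S. y < m} \<noteq> {}"
      then obtain y where "y \<in> S" "y < m" by auto
      moreover have "m \<le> s" using m(1) by (simp add: F_def)
      ultimately have "y \<in> F" by (simp add: F_def)
      then show False using m(2) \<open>y < m\<close> by fastforce
    qed
    then have "cnt m = 0" unfolding cnt_def by (simp only: card.empty)
    then show ?case using m(1) by (auto simp: F_def)
  next
    case (Suc n)
    then obtain x where x: "x \<in> S" "cnt x = n" by blast
    obtain s where s: "s \<in> S" "s > x" using unb by blast
    define F where "F = {y\<in>S. x < y \<and> y \<le> s}"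
    have "finite F" by (rule finite_subset[OF _ fin[of s]]) (auto simp: F_def)
    have "F \<noteq> {}" using s by (auto simp: F_def)
    define m where "m = Min F"
    have m: "m \<in> F" "\<And>y. y \<in> F \<Longrightarrow> m \<le> y" using \<open>finite F\<close> \<open>F \<noteq> {}\<close> by (auto simp: m_def)
    have eq: "{y\<in>S. y < m} = insert x {y\<in>S. y < x}"
    proof (intro equalityI subsetI)
      fix y assume y: "y \<in> {y\<in>S. y < m}"
      show "y \<in> insert x {y\<in>S. y < x}"
      proof (rule ccontr)
        assume "y \<notin> insert x {y\<in>S. y < x}"
        then have "x < y" using y by auto
        moreover have "m \<le> s" using m(1) by (simp add: F_def)
        ultimately have "y \<in> F" using y by (simp add: F_def)
        then show False using m(2) y by fastforce
      qed
    next
      fix y assume "y \<in> insert x {y\<in>S. y < x}"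
      moreover have "x < m" using m(1) by (simp add: F_def)
      ultimately show "y \<in> {y\<in>S. y < m}" using x by auto
    qed
    have "cnt m = Suc n" unfolding cnt_def eq using finlt[of x] x by (simp add: cnt_def)
    then show ?case using m(1) by (auto simp: F_def)
  qed
  have the: "enum_real S k \<in> S \<and> cnt (enum_real S k) = k" for k
  proof -
    have "\<exists>!x. x \<in> S \<and> cnt x = k" using ex[of k] inj by blast
    then show ?thesis unfolding enum_real_def cnt_def by (rule theI')
  qed
  show "enum_real S n \<in> S" "card {y\<in>S. y < enum_real S n} = n" using the[of n] by (auto simp: cnt_def)
  show sm: "strict_mono (enum_real S)"
  proof (rule strict_monoI)
    fix k l :: nat assume "k < l"
    show "enum_real S k < enum_real S l"
    proof (rule ccontr)
      assume "\<not> enum_real S k < enum_real S l"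
      then have "enum_real S l \<le> enum_real S k" by simp
      then have "cnt (enum_real S l) \<le> cnt (enum_real S k)"
      proof (cases "enum_real S l = enum_real S k")
        case False
        then have "enum_real S l < enum_real S k" using \<open>enum_real S l \<le> enum_real S k\<close> by simp
        then show ?thesis using mono[of "enum_real S l" "enum_real S k"] the[of k] the[of l] by simp
      qed simp
      then show False using the[of k] the[of l] \<open>k < l\<close> by simp
    qed
  qed
  show "\<exists>n. x = enum_real S n" if "x \<in> S" for x
    using inj[of x "enum_real S (cnt x)"] the[of "cnt x"] that by auto
  show "enum_real S (Suc n) \<le> y" if "y \<in> S" "enum_real S n < y" for y
  proof (rule ccontr)
    assume "\<not> enum_real S (Suc n) \<le> y"
    then have "y < enum_real S (Suc n)" by simp
    then have "cnt y < Suc n" using mono[of y "enum_real S (Suc n)"] the[of "Suc n"] that by auto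
    moreover have "n < cnt y" using mono[of "enum_real S n" y] the[of n] that by auto
    ultimately show False by simp
  qed
qed


lemma summ_sq: assumes "C > 0" shows "summable (\<lambda>n::nat. 1 / (C * (real n + 1)^2))"
proof -
  have "summable (\<lambda>n::nat. inverse (real n ^ 2))" by (rule inverse_power_summable) simp
  then have "summable (\<lambda>n::nat. inverse (real (Suc n) ^ 2))" by (subst summable_Suc_iff)
  then have "summable (\<lambda>n::nat. inverse C * inverse (real (Suc n) ^ 2))" by (rule summable_mult)
  then show ?thesis by (simp add: field_simps)
qed

context
  fixes L :: "nat \<Rightarrow> real" and \<rho>2 :: real
  assumes L1: "L 1 > 0" and r2: "\<rho>2 > 0"
    and stp: "\<And>n. n \<ge> 1 \<Longrightarrow> L (Suc n) - L n \<ge> \<rho>2 * real n"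
begin

lemma L_diff: "1 \<le> n \<Longrightarrow> n \<le> m \<Longrightarrow> L m - L n \<ge> \<rho>2 * (real m - real n)"
proof (induction m)
  case 0 then show ?case by simp
next
  case (Suc m)
  show ?case
  proof (cases "n = Suc m")
    case True then show ?thesis by simp
  next
    case False
    then have "n \<le> m" using Suc by simp
    then have "L m - L n \<ge> \<rho>2 * (real m - real n)" using Suc by simp
    moreover have "L (Suc m) - L m \<ge> \<rho>2 * real m" using stp[of m] \<open>n \<le> m\<close> Suc by simp
    moreover have "\<rho>2 * real m \<ge> \<rho>2" using r2 \<open>n \<le> m\<close> Suc(2) by simp
    ultimately show ?thesis by (simp add: algebra_simps)
  qed
qed

lemma L_mono: "1 \<le> n \<Longrightarrow> n \<le> m \<Longrightarrow> L n \<le> L m"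
proof -
  assume a: "1 \<le> n" "n \<le> m"
  have "\<rho>2 * (real m - real n) \<ge> 0" using r2 a by simp
  then show ?thesis using L_diff[OF a] by linarith
qed

lemma L_pos: "n \<ge> 1 \<Longrightarrow> L n \<ge> L 1"
  using L_mono[of 1 n] by simp

lemma L_pos': "n \<ge> 1 \<Longrightarrow> L n > 0"
  using L_pos L1 by force


lemma L_strict: "1 \<le> n \<Longrightarrow> n < m \<Longrightarrow> L n < L m"
proof -
  assume a: "1 \<le> n" "n < m"
  have "\<rho>2 * (real m - real n) > 0" using r2 a by simp
  then show ?thesis using L_diff[of n m] a by linarith
qed

lemma L_sep: "1 \<le> n \<Longrightarrow> 1 \<le> m \<Longrightarrow> \<bar>L n - L m\<bar> \<ge> \<rho>2 * \<bar>real n - real m\<bar>"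
  using L_diff[of n m] L_diff[of m n] by (cases "n \<le> m") (auto simp: abs_if algebra_simps)

lemma L_inj: "1 \<le> n \<Longrightarrow> 1 \<le> m \<Longrightarrow> L n = L m \<Longrightarrow> n = m"
  using L_strict[of n m] L_strict[of m n] by (cases n m rule: linorder_cases) auto

definition "Cq = min (L 1) (\<rho>2 / 3)"

lemma Cq: "Cq > 0" using L1 r2 by (simp add: Cq_def)

lemma L_quad: "n \<ge> 1 \<Longrightarrow> L n \<ge> Cq * (real n)^2"
proof (induction n rule: dec_induct)
  case base then show ?case by (simp add: Cq_def)
next
  case (step n)
  have "Cq * (real (Suc n))^2 = Cq * (real n)^2 + Cq * (2 * real n + 1)"
    by (simp add: power2_eq_square algebra_simps)
  also have "Cq * (2 * real n + 1) \<le> \<rho>2 / 3 * (2 * real n + 1)"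
    using Cq by (intro mult_right_mono) (auto simp: Cq_def)
  also have "\<dots> \<le> \<rho>2 * real n" using r2 step(1) by (simp add: field_simps)
  finally show ?case using step(3) stp[OF step(1)] by simp
qed

lemma L_unb: "\<exists>N\<ge>1. \<forall>n\<ge>N. L n > d"
proof -
  obtain N :: nat where N: "real N > d / Cq" using reals_Archimedean2 by blast
  have "L n > d" if "n \<ge> max N 1" for n
  proof -
    have "real n \<ge> real N" "real n \<ge> 1" using that by auto
    then have "(real n)^2 \<ge> real n" by (simp add: power2_eq_square)
    then have "Cq * (real n)^2 \<ge> Cq * real n" using Cq by simp
    moreover have "Cq * real n \<ge> Cq * real N" using Cq \<open>real n \<ge> real N\<close> by simp
    moreover have "Cq * real N > d" using N Cq by (simp add: field_simps)
    ultimately show ?thesis using L_quad[of n] that by linarith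
  qed
  then show ?thesis by (intro exI[of _ "max N 1"]) auto
qed


lemma L_cross:
  assumes sg: "\<sigma> \<ge> 0"
  shows "\<exists>m1>0. \<forall>k j. 1 \<le> k \<longrightarrow> 1 \<le> j \<longrightarrow> L k + \<sigma> \<noteq> L j \<longrightarrow> \<bar>L k + \<sigma> - L j\<bar> \<ge> m1"
proof -
  obtain N0 :: nat where N0: "real N0 > (\<sigma> + 1) / \<rho>2" using reals_Archimedean2 by blast
  define N where "N = max N0 1"
  have N1: "N \<ge> 1" by (simp add: N_def)
  have big: "L k - L (k - 1) \<ge> \<sigma> + 1" if "k > N" for k
  proof -
    have k1: "k - 1 \<ge> 1" "Suc (k - 1) = k" using that N1 by auto
    have "L k - L (k - 1) \<ge> \<rho>2 * real (k - 1)" using stp[OF k1(1)] k1(2) by simp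
    moreover have "real (k - 1) \<ge> real N0" using that by (simp add: N_def)
    then have "\<rho>2 * real (k - 1) \<ge> \<rho>2 * real N0" using r2 by simp
    moreover have "\<rho>2 * real N0 > \<sigma> + 1" using N0 r2 by (simp add: field_simps)
    ultimately show ?thesis by linarith
  qed
  define F where "F = (\<lambda>(k, j). \<bar>L k + \<sigma> - L j\<bar>) ` {(k, j). k \<in> {1..N} \<and> j \<in> {1..N} \<and> L k + \<sigma> \<noteq> L j}"
  have finF: "finite F" unfolding F_def
    by (rule finite_imageI, rule finite_subset[of _ "{1..N} \<times> {1..N}"]) auto
  define m1 where "m1 = Min (insert 1 F)"
  have Fpos: "x > 0" if "x \<in> F" for x using that by (auto simp: F_def)
  have m1pos: "m1 > 0" unfolding m1_def using finF Fpos by (subst Min_gr_iff) auto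
  have m1F: "m1 \<le> x" if "x \<in> F" for x unfolding m1_def using finF that by simp
  have m11: "m1 \<le> 1" unfolding m1_def using finF by simp
  show ?thesis
  proof (intro exI[of _ m1] conjI allI impI m1pos)
    fix k j :: nat assume k: "1 \<le> k" and j: "1 \<le> j" and ne: "L k + \<sigma> \<noteq> L j"
    show "\<bar>L k + \<sigma> - L j\<bar> \<ge> m1"
    proof (cases "k \<le> N \<and> j \<le> N")
      case True
      then have "\<bar>L k + \<sigma> - L j\<bar> \<in> F" using k j ne by (auto simp: F_def)
      then show ?thesis by (rule m1F)
    next
      case False
      consider "k = j" | "j < k" | "k < j" by linarith
      then show ?thesis
      proof cases
        case 1
        then have "\<sigma> \<noteq> 0" using ne by simp
        then have "\<bar>L N + \<sigma> - L N\<bar> \<in> F" using N1 unfolding F_def by (intro image_eqI[of _ _ "(N, N)"]) auto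
        then show ?thesis using 1 m1F by simp
      next
        case 2
        then have "k > N" using False by linarith
        have "L j \<le> L (k - 1)" using 2 j by (intro L_mono) auto
        then have "L k + \<sigma> - L j \<ge> 1" using big[OF \<open>k > N\<close>] sg by linarith
        then show ?thesis using m11 by linarith
      next
        case 3
        then have "j > N" using False by linarith
        have "L k \<le> L (j - 1)" using 3 k by (intro L_mono) auto
        then have "L j - L k - \<sigma> \<ge> 1" using big[OF \<open>j > N\<close>] by linarith
        then show ?thesis using m11 by linarith
      qed
    qed
  qed
qed

lemma real_case:
  assumes sg: "\<sigma> \<ge> 0"
  shows "\<exists>\<Lambda> :: nat \<Rightarrow> complex.
           bij_betw \<Lambda> {1..} ({complex_of_real (L n) + complex_of_real \<sigma> | n. n \<ge> 1} \<union> {complex_of_real (L n) | n. n \<ge> 1}) \<and>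
           (\<exists>\<delta>>0. \<exists>\<rho>>0.
              (\<forall>n\<ge>1. Re (\<Lambda> n) \<ge> \<delta> * cmod (\<Lambda> n)) \<and>
              (\<forall>n\<ge>1. \<forall>m\<ge>1. cmod (\<Lambda> n - \<Lambda> m) \<ge> \<rho> * \<bar>real n - real m\<bar>)) \<and>
           summable (\<lambda>n. 1 / cmod (\<Lambda> (n + 1)))"
proof -
  define T where "T = {L n + \<sigma> | n. n \<ge> 1} \<union> {L n | n. n \<ge> 1}"
  have Tpos: "x > 0" if "x \<in> T" for x using that L_pos' sg unfolding T_def by (force intro: add_pos_nonneg)
  have Tfin: "finite {x\<in>T. x \<le> d}" for d
  proof -
    obtain N where N: "N \<ge> 1" "\<And>n. n \<ge> N \<Longrightarrow> L n > d" using L_unb[of d] by blast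
    have "{x\<in>T. x \<le> d} \<subseteq> (\<lambda>n. L n + \<sigma>) ` {1..N} \<union> L ` {1..N}"
    proof
      fix x assume "x \<in> {x\<in>T. x \<le> d}"
      then have x: "x \<in> T" "x \<le> d" by auto
      then consider n where "n \<ge> 1" "x = L n + \<sigma>" | n where "n \<ge> 1" "x = L n" unfolding T_def by blast
      then show "x \<in> (\<lambda>n. L n + \<sigma>) ` {1..N} \<union> L ` {1..N}"
      proof cases
        case 1
        then have "n \<le> N" using N(2)[of n] x sg by (cases "n \<ge> N") auto
        then show ?thesis using 1 by auto
      next
        case 2
        then have "n \<le> N" using N(2)[of n] x by (cases "n \<ge> N") auto
        then show ?thesis using 2 by auto
      qed
    qed
    then show ?thesis by (rule finite_subset) auto
  qed
  have Tunb: "\<exists>x\<in>T. x > d" for d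
  proof -
    obtain N where N: "N \<ge> 1" "\<And>n. n \<ge> N \<Longrightarrow> L n > d" using L_unb[of d] by blast
    then have "L N \<in> T" "L N > d" unfolding T_def by auto
    then show ?thesis by blast
  qed
  define e where "e = enum_real T"
  note P = enum_real_props[OF Tfin Tunb, folded e_def]
  obtain m1 where m1: "m1 > 0" "\<And>k j. 1 \<le> k \<Longrightarrow> 1 \<le> j \<Longrightarrow> L k + \<sigma> \<noteq> L j \<Longrightarrow> \<bar>L k + \<sigma> - L j\<bar> \<ge> m1"
    using L_cross[OF sg] by blast
  define \<rho> where "\<rho> = min \<rho>2 m1"
  have \<rho>: "\<rho> > 0" using m1 r2 by (simp add: \<rho>_def)
  have sepL: "\<bar>L k - L j\<bar> \<ge> \<rho>2" if "1 \<le> k" "1 \<le> j" "k \<noteq> j" for k j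
  proof -
    have "\<bar>real k - real j\<bar> \<ge> 1" using that by linarith
    then have "\<rho>2 * \<bar>real k - real j\<bar> \<ge> \<rho>2" using r2 by simp
    then show ?thesis using L_sep[of k j] that by linarith
  qed
  have sepT: "\<bar>x - y\<bar> \<ge> \<rho>" if "x \<in> T" "y \<in> T" "x \<noteq> y" for x y
  proof -
    have "\<bar>x - y\<bar> \<ge> \<rho>2 \<or> \<bar>x - y\<bar> \<ge> m1"
    proof -
      from that(1) consider k where "k \<ge> 1" "x = L k + \<sigma>" | k where "k \<ge> 1" "x = L k" unfolding T_def by blast
      then show ?thesis
      proof cases
        case 1
        note kx = 1
        from that(2) consider j where "j \<ge> 1" "y = L j + \<sigma>" | j where "j \<ge> 1" "y = L j" unfolding T_def by blast
        then show ?thesis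
        proof cases
          case 1
          then have "k \<noteq> j" using kx that(3) by auto
          then show ?thesis using sepL[of k j] 1 kx by simp
        next
          case 2
          then show ?thesis using m1(2)[of k j] kx that(3) by simp
        qed
      next
        case 2
        note kx = 2
        from that(2) consider j where "j \<ge> 1" "y = L j + \<sigma>" | j where "j \<ge> 1" "y = L j" unfolding T_def by blast
        then show ?thesis
        proof cases
          case 1
          then show ?thesis using m1(2)[of j k] kx that(3) by (simp add: abs_minus_commute)
        next
          case 2
          then have "k \<noteq> j" using kx that(3) by auto
          then show ?thesis using sepL[of k j] 2 kx by simp
        qed
      qed
    qed
    then show ?thesis unfolding \<rho>_def by linarith
  qed
  have egap: "e (Suc n) - e n \<ge> \<rho>" for n
  proof -
    have "e n < e (Suc n)" using P(3) by (simp add: strict_mono_def)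
    then show ?thesis using sepT[OF P(1) P(1), of "Suc n" n] by simp
  qed
  have ediff: "e m - e n \<ge> \<rho> * (real m - real n)" if "n \<le> m" for n m
    using that
  proof (induction m rule: dec_induct)
    case base then show ?case by simp
  next
    case (step m) then show ?case using egap[of m] by (simp add: algebra_simps)
  qed
  have esep: "\<bar>e a - e b\<bar> \<ge> \<rho> * \<bar>real a - real b\<bar>" for a b
    using ediff[of a b] ediff[of b a] by (cases "a \<le> b") (auto simp: abs_if algebra_simps)
  have einj: "inj e" using P(3) by (rule strict_mono_imp_inj_on)
  have e2k: "e (2 * k) \<ge> L (k + 1)" for k
  proof (rule ccontr)
    assume "\<not> e (2 * k) \<ge> L (k + 1)"
    then have lt: "e (2 * k) < L (k + 1)" by simp
    have sub: "e ` {0..2*k} \<subseteq> (\<lambda>n. L n + \<sigma>) ` {1..k} \<union> L ` {1..k}"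
    proof
      fix x assume "x \<in> e ` {0..2*k}"
      then obtain i where i: "i \<le> 2 * k" "x = e i" by auto
      have "x \<le> e (2 * k)" using i P(3) by (simp add: strict_mono_less_eq)
      then have xl: "x < L (k + 1)" using lt by simp
      have small: "n \<le> k" if "n \<ge> 1" "L n \<le> x" for n
      proof (rule ccontr)
        assume "\<not> n \<le> k"
        then have "L (k + 1) \<le> L n" by (intro L_mono) auto
        then show False using that xl by simp
      qed
      from P(1)[of i] i(2) consider n where "n \<ge> 1" "x = L n + \<sigma>" | n where "n \<ge> 1" "x = L n"
        unfolding T_def by blast
      then show "x \<in> (\<lambda>n. L n + \<sigma>) ` {1..k} \<union> L ` {1..k}"
      proof cases
        case 1
        then have "n \<le> k" using small[of n] sg by simp
        then show ?thesis using 1 by auto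
      next
        case 2
        then have "n \<le> k" using small[of n] by simp
        then show ?thesis using 2 by auto
      qed
    qed
    have "card (e ` {0..2*k}) = 2 * k + 1" using einj by (simp add: card_image inj_on_subset)
    moreover have "card ((\<lambda>n. L n + \<sigma>) ` {1..k} \<union> L ` {1..k}) \<le> k + k"
      by (rule order.trans[OF card_Un_le add_mono]) (auto intro: order.trans[OF card_image_le])
    moreover have "card (e ` {0..2*k}) \<le> card ((\<lambda>n. L n + \<sigma>) ` {1..k} \<union> L ` {1..k})"
      by (rule card_mono[OF _ sub]) auto
    ultimately show False by simp
  qed
  have elow: "e n \<ge> Cq / 4 * (real n + 1)^2" for n
  proof -
    define k where "k = n div 2"
    have "2 * k \<le> n" by (simp add: k_def)
    then have "e n \<ge> e (2 * k)" using P(3) by (simp add: strict_mono_less_eq)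
    moreover have "L (k + 1) \<ge> Cq * (real (k + 1))^2" by (rule L_quad) simp
    moreover have "n \<le> 2 * k + 1" unfolding k_def by presburger
    then have "real n \<le> 2 * real k + 1" by linarith
    then have "real (k + 1) \<ge> (real n + 1) / 2" by simp
    then have "(real (k + 1))^2 \<ge> ((real n + 1) / 2)^2" by (intro power_mono) auto
    then have "Cq * (real (k + 1))^2 \<ge> Cq * ((real n + 1) / 2)^2" using Cq by (intro mult_left_mono) auto
    ultimately show ?thesis using e2k[of k] by (simp add: power_divide)
  qed
  define \<Lambda> where "\<Lambda> n = complex_of_real (e (n - 1))" for n
  have setEq: "{complex_of_real (L n) + complex_of_real \<sigma> | n. n \<ge> 1} \<union> {complex_of_real (L n) | n. n \<ge> 1}
      = complex_of_real ` T" unfolding T_def by (simp add: setcompr_eq_image image_Un image_image)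
  have bij: "bij_betw \<Lambda> {1..} (complex_of_real ` T)"
  proof (rule bij_betw_imageI)
    show "inj_on \<Lambda> {1..}"
    proof (rule inj_onI)
      fix a b :: nat assume "a \<in> {1..}" "b \<in> {1..}" "\<Lambda> a = \<Lambda> b"
      then have "e (a - 1) = e (b - 1)" "a \<ge> 1" "b \<ge> 1" by (auto simp: \<Lambda>_def)
      then show "a = b" using einj by (auto dest: injD)
    qed
    show "\<Lambda> ` {1..} = complex_of_real ` T"
    proof (intro equalityI subsetI)
      fix x assume "x \<in> \<Lambda> ` {1..}"
      then show "x \<in> complex_of_real ` T" using P(1) by (auto simp: \<Lambda>_def)
    next
      fix x assume "x \<in> complex_of_real ` T"
      then obtain t where t: "t \<in> T" "x = of_real t" by auto
      then obtain k where "t = e k" using P(4) by blast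
      then have "x = \<Lambda> (k + 1)" using t by (simp add: \<Lambda>_def)
      then show "x \<in> \<Lambda> ` {1..}" by auto
    qed
  qed
  show ?thesis
  proof (intro exI[of _ \<Lambda>] conjI)
    show "bij_betw \<Lambda> {1..} ({complex_of_real (L n) + complex_of_real \<sigma> | n. n \<ge> 1} \<union> {complex_of_real (L n) | n. n \<ge> 1})"
      using bij setEq by simp
    show "\<exists>\<delta>>0. \<exists>\<rho>>0. (\<forall>n\<ge>1. Re (\<Lambda> n) \<ge> \<delta> * cmod (\<Lambda> n)) \<and>
              (\<forall>n\<ge>1. \<forall>m\<ge>1. cmod (\<Lambda> n - \<Lambda> m) \<ge> \<rho> * \<bar>real n - real m\<bar>)"
    proof -
      have A: "Re (\<Lambda> n) \<ge> 1 * cmod (\<Lambda> n)" for n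
      proof -
        have "e (n - 1) > 0" using Tpos P(1) by blast
        then show ?thesis by (simp add: \<Lambda>_def)
      qed
      have B: "cmod (\<Lambda> n - \<Lambda> m) \<ge> \<rho> * \<bar>real n - real m\<bar>" if "n \<ge> 1" "m \<ge> 1" for n m
      proof -
        have "cmod (\<Lambda> n - \<Lambda> m) = \<bar>e (n - 1) - e (m - 1)\<bar>"
          unfolding \<Lambda>_def by (metis norm_of_real of_real_diff)
        moreover have "\<bar>e (n - 1) - e (m - 1)\<bar> \<ge> \<rho> * \<bar>real (n - 1) - real (m - 1)\<bar>" by (rule esep)
        moreover have "\<bar>real (n - 1) - real (m - 1)\<bar> = \<bar>real n - real m\<bar>" using that by auto
        ultimately show ?thesis by simp
      qed
      show ?thesis using A B \<rho> by (intro exI[of _ 1] exI[of _ \<rho>]) auto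
    qed
    show "summable (\<lambda>n. 1 / cmod (\<Lambda> (n + 1)))"
    proof (rule summable_comparison_test'[OF summ_sq[of "Cq / 4"]])
      show "Cq / 4 > 0" using Cq by simp
      fix n :: nat assume "n \<ge> 0"
      have ep: "e n > 0" using Tpos P(1) by blast
      have pos2: "Cq / 4 * (real n + 1)^2 > 0" using Cq by simp
      have "norm (1 / cmod (\<Lambda> (n + 1))) = 1 / e n" using ep by (simp add: \<Lambda>_def)
      also have "\<dots> \<le> 1 / (Cq / 4 * (real n + 1)^2)"
        using elow[of n] pos2 by (intro divide_left_mono) auto
      finally show "norm (1 / cmod (\<Lambda> (n + 1))) \<le> 1 / (Cq / 4 * (real n + 1)^2)" .
    qed
  qed
qed


lemma complex_case:
  assumes r: "r > 0"
  shows "\<exists>\<Lambda> :: nat \<Rightarrow> complex.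
           bij_betw \<Lambda> {1..} ({complex_of_real (L n) + Complex 0 (- r) | n. n \<ge> 1} \<union> {complex_of_real (L n) | n. n \<ge> 1}) \<and>
           (\<exists>\<delta>>0. \<exists>\<rho>>0.
              (\<forall>n\<ge>1. Re (\<Lambda> n) \<ge> \<delta> * cmod (\<Lambda> n)) \<and>
              (\<forall>n\<ge>1. \<forall>m\<ge>1. cmod (\<Lambda> n - \<Lambda> m) \<ge> \<rho> * \<bar>real n - real m\<bar>)) \<and>
           summable (\<lambda>n. 1 / cmod (\<Lambda> (n + 1)))"
proof -
  define s where "s = Complex 0 (- r)"
  define k where "k n = (n + 1) div 2" for n :: nat
  define \<Lambda> where "\<Lambda> n = complex_of_real (L (k n)) + (if even n then s else 0)" for n
  have k1: "k n \<ge> 1" if "n \<ge> 1" for n using that unfolding k_def by presburger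
  have kb: "2 * k n - 1 \<le> n \<and> n \<le> 2 * k n" if "n \<ge> 1" for n using that unfolding k_def by presburger
  have ReL: "Re (\<Lambda> n) = L (k n)" for n by (simp add: \<Lambda>_def s_def)
  have ImL: "Im (\<Lambda> n) = (if even n then - r else 0)" for n by (simp add: \<Lambda>_def s_def)
  have setEq: "\<Lambda> ` {1..} = {complex_of_real (L n) + s | n. n \<ge> 1} \<union> {complex_of_real (L n) | n. n \<ge> 1}"
  proof (intro equalityI subsetI)
    fix x assume "x \<in> \<Lambda> ` {1..}"
    then obtain n where n: "n \<ge> 1" "x = \<Lambda> n" by auto
    show "x \<in> {complex_of_real (L n) + s | n. n \<ge> 1} \<union> {complex_of_real (L n) | n. n \<ge> 1}"
      using n k1[OF n(1)] by (cases "even n") (auto simp: \<Lambda>_def)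
  next
    fix x assume "x \<in> {complex_of_real (L n) + s | n. n \<ge> 1} \<union> {complex_of_real (L n) | n. n \<ge> 1}"
    then consider j where "j \<ge> 1" "x = complex_of_real (L j) + s" | j where "j \<ge> 1" "x = complex_of_real (L j)"
      by blast
    then show "x \<in> \<Lambda> ` {1..}"
    proof cases
      case 1
      have "k (2 * j) = j" "even (2 * j)" unfolding k_def by presburger+
      then have "x = \<Lambda> (2 * j)" using 1 by (simp add: \<Lambda>_def)
      moreover have "2 * j \<in> {1..}" using 1 by simp
      ultimately show ?thesis by blast
    next
      case 2
      have "k (2 * j - 1) = j" "odd (2 * j - 1)" using 2(1) unfolding k_def by presburger+
      then have "x = \<Lambda> (2 * j - 1)" using 2 by (simp add: \<Lambda>_def)
      moreover have "2 * j - 1 \<in> {1..}" using 2 by simp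
      ultimately show ?thesis by blast
    qed
  qed
  have inj: "inj_on \<Lambda> {1..}"
  proof (rule inj_onI)
    fix a b :: nat assume a: "a \<in> {1..}" and b: "b \<in> {1..}" and eq: "\<Lambda> a = \<Lambda> b"
    have par: "even a \<longleftrightarrow> even b" using arg_cong[OF eq, of Im] r by (auto simp: ImL split: if_splits)
    have "L (k a) = L (k b)" using arg_cong[OF eq, of Re] by (simp add: ReL)
    then have "k a = k b" using L_inj k1 a b by auto
    then show "a = b" using par unfolding k_def by presburger
  qed
  define \<delta> where "\<delta> = L 1 / (L 1 + r)"
  have \<delta>: "\<delta> > 0" using L1 r by (simp add: \<delta>_def)
  have A: "Re (\<Lambda> n) \<ge> \<delta> * cmod (\<Lambda> n)" if "n \<ge> 1" for n
  proof -
    have Lk: "L (k n) \<ge> L 1" using L_pos k1[OF that] by blast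
    have "cmod (\<Lambda> n) \<le> cmod (complex_of_real (L (k n))) + cmod (if even n then s else 0)"
      unfolding \<Lambda>_def by (rule norm_triangle_ineq)
    also have "\<dots> \<le> L (k n) + r" using Lk L1 r by (simp add: s_def cmod_def)
    finally have c: "cmod (\<Lambda> n) \<le> L (k n) + r" .
    have "\<delta> * cmod (\<Lambda> n) \<le> \<delta> * (L (k n) + r)" using c \<delta> by (simp add: mult_left_mono)
    also have "\<dots> \<le> L (k n)"
    proof -
      have "L 1 * (L (k n) + r) \<le> L (k n) * (L 1 + r)" using Lk r by (simp add: algebra_simps mult_right_mono)
      then show ?thesis using L1 r by (simp add: \<delta>_def field_simps)
    qed
    finally show ?thesis by (simp add: ReL)
  qed
  define \<rho> where "\<rho> = min (\<rho>2 / 3) r"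
  have \<rho>: "\<rho> > 0" using r r2 by (simp add: \<rho>_def)
  have B: "cmod (\<Lambda> n - \<Lambda> m) \<ge> \<rho> * \<bar>real n - real m\<bar>" if nm: "n \<ge> 1" "m \<ge> 1" for n m
  proof (cases "k n = k m")
    case True
    show ?thesis
    proof (cases "n = m")
      case True then show ?thesis by simp
    next
      case False
      have nm1: "n = m + 1 \<or> m = n + 1" using False True unfolding k_def by presburger
      then have "\<bar>real n - real m\<bar> = 1" "(even n \<longleftrightarrow> odd m)" by auto
      then have "\<bar>Im (\<Lambda> n - \<Lambda> m)\<bar> = r" using r by (auto simp: ImL)
      then have "cmod (\<Lambda> n - \<Lambda> m) \<ge> r" using abs_Im_le_cmod by metis
      then show ?thesis using \<open>\<bar>real n - real m\<bar> = 1\<close> by (simp add: \<rho>_def)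
    qed
  next
    case False
    have "\<bar>L (k n) - L (k m)\<bar> \<ge> \<rho>2 * \<bar>real (k n) - real (k m)\<bar>" using L_sep k1 nm by blast
    moreover have "\<bar>Re (\<Lambda> n - \<Lambda> m)\<bar> = \<bar>L (k n) - L (k m)\<bar>" by (simp add: ReL)
    ultimately have c1: "cmod (\<Lambda> n - \<Lambda> m) \<ge> \<rho>2 * \<bar>real (k n) - real (k m)\<bar>"
      using abs_Re_le_cmod by (metis order.trans)
    have kk: "\<bar>real (k n) - real (k m)\<bar> \<ge> 1" using False by linarith
    have b1: "2 * real (k n) - 1 \<le> real n" "real n \<le> 2 * real (k n)" using kb[OF nm(1)] k1[OF nm(1)] by linarith+
    have b2: "2 * real (k m) - 1 \<le> real m" "real m \<le> 2 * real (k m)" using kb[OF nm(2)] k1[OF nm(2)] by linarith+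
    have "\<bar>real n - real m\<bar> \<le> 3 * \<bar>real (k n) - real (k m)\<bar>"
    proof (cases "real (k m) \<le> real (k n)")
      case True
      then have e: "\<bar>real (k n) - real (k m)\<bar> = real (k n) - real (k m)" by simp
      have kk': "1 \<le> real (k n) - real (k m)" using kk e by simp
      have h1: "real n - real m \<le> 3 * \<bar>real (k n) - real (k m)\<bar>" unfolding e using b1 b2 kk' by argo
      have h2: "- (real n - real m) \<le> 3 * \<bar>real (k n) - real (k m)\<bar>" unfolding e using b1 b2 kk' by argo
      show ?thesis using h1 h2 by (simp only: abs_le_iff)
    next
      case False
      then have e: "\<bar>real (k n) - real (k m)\<bar> = real (k m) - real (k n)" by simp
      have kk': "1 \<le> real (k m) - real (k n)" using kk e by simp
      have h1: "real n - real m \<le> 3 * \<bar>real (k n) - real (k m)\<bar>" unfolding e using b1 b2 kk' by argo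
      have h2: "- (real n - real m) \<le> 3 * \<bar>real (k n) - real (k m)\<bar>" unfolding e using b1 b2 kk' by argo
      show ?thesis using h1 h2 by (simp only: abs_le_iff)
    qed
    then have "\<rho> * \<bar>real n - real m\<bar> \<le> \<rho>2 / 3 * (3 * \<bar>real (k n) - real (k m)\<bar>)"
      using \<rho> by (intro mult_mono) (auto simp: \<rho>_def)
    then show ?thesis using c1 by simp
  qed
  have S: "summable (\<lambda>n. 1 / cmod (\<Lambda> (n + 1)))"
  proof (rule summable_comparison_test'[OF summ_sq[of "Cq / 4"]])
    show "Cq / 4 > 0" using Cq by simp
    fix n :: nat assume "n \<ge> 0"
    have kn: "k (n + 1) \<ge> 1" using k1 by simp
    have Lp: "L (k (n + 1)) > 0" using L_pos' kn by blast
    have "cmod (\<Lambda> (n + 1)) \<ge> L (k (n + 1))" using complex_Re_le_cmod[of "\<Lambda> (n + 1)"] by (simp add: ReL)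
    moreover have "L (k (n + 1)) \<ge> Cq / 4 * (real n + 1)^2"
    proof -
      have "L (k (n + 1)) \<ge> Cq * (real (k (n + 1)))^2" by (rule L_quad[OF kn])
      moreover have "real (k (n + 1)) \<ge> (real n + 1) / 2"
      proof -
        have "n + 1 \<le> 2 * k (n + 1)" unfolding k_def by presburger
        then have "real n + 1 \<le> 2 * real (k (n + 1))" by linarith
        then show ?thesis by simp
      qed
      then have "(real (k (n + 1)))^2 \<ge> ((real n + 1) / 2)^2" by (intro power_mono) auto
      then have "Cq * (real (k (n + 1)))^2 \<ge> Cq * ((real n + 1) / 2)^2" using Cq by (intro mult_left_mono) auto
      ultimately show ?thesis by (simp add: power_divide)
    qed
    ultimately have ge: "cmod (\<Lambda> (n + 1)) \<ge> Cq / 4 * (real n + 1)^2" by linarith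
    have pos2: "Cq / 4 * (real n + 1)^2 > 0" using Cq by simp
    have cpos: "cmod (\<Lambda> (n + 1)) > 0" using ge pos2 by linarith
    have "norm (1 / cmod (\<Lambda> (n + 1))) = 1 / cmod (\<Lambda> (n + 1))" by simp
    also have "\<dots> \<le> 1 / (Cq / 4 * (real n + 1)^2)" using ge pos2 cpos by (intro divide_left_mono) (auto intro: mult_pos_pos)
    finally show "norm (1 / cmod (\<Lambda> (n + 1))) \<le> 1 / (Cq / 4 * (real n + 1)^2)" .
  qed
  have "bij_betw \<Lambda> {1..} ({complex_of_real (L n) + s | n. n \<ge> 1} \<union> {complex_of_real (L n) | n. n \<ge> 1})"
    using inj setEq by (simp add: bij_betw_def)
  then show ?thesis using A B S \<delta> \<rho> unfolding s_def by (intro exI[of _ \<Lambda>] conjI exI[of _ \<delta>] exI[of _ \<rho>]) auto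
qed

end


definition BZ :: "real \<Rightarrow> real set" where "BZ \<nu> = {x. 0 < x \<and> besselJ \<nu> x = 0}"

lemma BZ_fin: assumes "\<nu> \<ge> 0" shows "finite {x\<in>BZ \<nu>. x \<le> d}"
proof -
  have "{x\<in>BZ \<nu>. x \<le> d} = {x. 0 < x \<and> x \<le> d \<and> besselJ \<nu> x = 0}" by (auto simp: BZ_def)
  then show ?thesis using bessel_zeros_finite[OF assms] by simp
qed

lemma BZ_unb: assumes nu: "\<nu> \<ge> 0" shows "\<exists>x\<in>BZ \<nu>. x > d"
proof -
  define A where "A = max d 0 + 2 * \<nu> + 1"
  define L where "L = pi / sqrt (1/2)"
  have A: "A > d" "A > 0" "A \<ge> 2 * \<nu> + 1" using nu by (auto simp: A_def)
  have L0: "L > 0" by (simp add: L_def)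
  have pos: "x > 0" if "A \<le> x" for x using A that by linarith
  have Q: "bQ \<nu> x \<ge> 1/2" if "A \<le> x" "x \<le> A + L" for x
  proof -
    have x0: "x > 0" using pos that by blast
    have "x \<ge> 2 * \<nu> + 1" using A that by linarith
    then have "x^2 \<ge> (2 * \<nu> + 1)^2" using nu by (intro power_mono) auto
    moreover have "(2 * \<nu> + 1)^2 \<ge> 2 * (\<nu>^2 - 1/4)" using nu by (simp add: power2_eq_square algebra_simps)
    ultimately have "\<nu>^2 - 1/4 \<le> x^2 / 2" by simp
    then have "(\<nu>^2 - 1/4) / x^2 \<le> 1/2" using x0 by (simp add: divide_le_eq)
    then show ?thesis by (simp add: bQ_def)
  qed
  obtain x where x: "A \<le> x" "x \<le> A + L" "bu \<nu> x = 0"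
    using sturm_zero[of "1/2" L A "bu \<nu>" "bu1 \<nu>" "bQ \<nu>"] L_def bu_deriv[OF nu pos] bu1_deriv[OF nu pos] Q
    by auto
  then have "x \<in> BZ \<nu>" using bu_zero_iff[OF nu pos[OF x(1)]] pos[OF x(1)] by (simp add: BZ_def)
  moreover have "x > d" using x(1) A(1) by linarith
  ultimately show ?thesis by blast
qed

lemma bessel_zero_enum:
  "bessel_zero \<nu> n = enum_real (BZ \<nu>) (n - 1)"
proof -
  have s: "{y\<in>BZ \<nu>. y < x} = {y. 0 < y \<and> y < x \<and> besselJ \<nu> y = 0}" for x by (auto simp: BZ_def)
  have "(\<lambda>x. x \<in> BZ \<nu> \<and> card {y\<in>BZ \<nu>. y < x} = n - 1) =
        (\<lambda>x. 0 < x \<and> besselJ \<nu> x = 0 \<and> card {y. 0 < y \<and> y < x \<and> besselJ \<nu> y = 0} = n - 1)"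
    by (rule ext) (simp only: s, simp add: BZ_def)
  then show ?thesis unfolding bessel_zero_def enum_real_def by simp
qed

lemma bessel_zero_facts:
  assumes nu: "\<nu> \<ge> 0"
  shows "\<exists>c>0. 0 < bessel_zero \<nu> 1 \<and> (\<forall>n\<ge>1. bessel_zero \<nu> (Suc n) - bessel_zero \<nu> n \<ge> c)"
proof -
  define e where "e = enum_real (BZ \<nu>)"
  note P = enum_real_props[OF BZ_fin[OF nu] BZ_unb[OF nu], folded e_def]
  have epos: "e n > 0" for n using P(1)[of n] by (simp add: BZ_def)
  define z0 where "z0 = e 0"
  have z0: "z0 > 0" using epos by (simp add: z0_def)
  have ez0: "e n \<ge> z0" for n unfolding z0_def using P(3) by (simp add: strict_mono_less_eq)
  define M where "M = 2 + 1 / (4 * z0^2)"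
  have "1 / (4 * z0^2) > 0" using z0 by simp
  then have M: "M > 0" unfolding M_def by linarith
  define c where "c = pi / sqrt M"
  have c: "c > 0" using M by (simp add: c_def)
  have ab: "e n < e (Suc n)" for n using P(3) by (simp add: strict_mono_def)
  have d1: "(bu \<nu> has_real_derivative bu1 \<nu> x) (at x)" if "e n \<le> x" for x n
    using bu_deriv[OF nu] epos[of n] that by simp
  have d2: "(bu1 \<nu> has_real_derivative - (bQ \<nu> x * bu \<nu> x)) (at x)" if "e n \<le> x" for x n
    using bu1_deriv[OF nu] epos[of n] that by simp
  have nz: "bu \<nu> x \<noteq> 0" if x: "e n < x" "x < e (Suc n)" for x n
  proof
    assume x3: "bu \<nu> x = 0"
    have "x > 0" using epos[of n] x by simp
    then have "x \<in> BZ \<nu>" using x3 bu_zero_iff[OF nu] by (simp add: BZ_def)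
    then show False using P(5)[of x n] x by simp
  qed
  have QM: "bQ \<nu> x < M" if "e n \<le> x" for x n
  proof -
    have xz: "x \<ge> z0" using ez0[of n] that by simp
    have x0: "x > 0" using xz z0 by simp
    have "z0^2 \<le> x^2" using xz z0 by (intro power_mono) auto
    moreover have "0 < 4 * z0^2" "0 < 4 * x^2" using z0 x0 by simp_all
    ultimately have i1: "1 / (4 * x^2) \<le> 1 / (4 * z0^2)" by (intro divide_left_mono) (auto intro: mult_pos_pos)
    have "- ((\<nu>^2 - 1/4) / x^2) \<le> 1 / (4 * x^2)" using x0 nu by (simp add: field_simps)
    then have "bQ \<nu> x \<le> 1 + 1 / (4 * z0^2)" using i1 by (simp add: bQ_def)
    then show ?thesis by (simp add: M_def)
  qed
  have zz: "bu \<nu> (e n) = 0" for n using P(1)[of n] bu_zero_iff[OF nu] epos[of n] by (simp add: BZ_def)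
  have gap: "e (Suc n) - e n \<ge> c" for n
    unfolding c_def
    by (rule sturm_gap[OF ab[of n] d1[of n] d2[of n] zz zz nz QM[of n] M]) auto
  have bz: "bessel_zero \<nu> n = e (n - 1)" for n by (simp add: bessel_zero_enum e_def)
  show ?thesis
  proof (intro exI[of _ c] conjI allI impI c)
    show "0 < bessel_zero \<nu> 1" using epos by (simp add: bz)
    fix n :: nat assume "n \<ge> 1"
    then have "Suc n - 1 = Suc (n - 1)" by simp
    then show "bessel_zero \<nu> (Suc n) - bessel_zero \<nu> n \<ge> c" using gap[of "n - 1"] by (simp add: bz)
  qed
qed


theorem proposition4p1:
  fixes \<alpha> \<mu> a1 a2 :: real
  assumes "0 \<le> \<alpha>" and "\<alpha> < 1" and "\<mu> \<le> mu_crit \<alpha>"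
    and "\<forall>n l. 1 \<le> n \<longrightarrow> 1 \<le> l \<longrightarrow> n \<noteq> l \<longrightarrow>
           complex_of_real (lam \<alpha> \<mu> n - lam \<alpha> \<mu> l) \<noteq> eig1 a1 a2 - eig2 a1 a2"
  shows "\<exists>\<Lambda> :: nat \<Rightarrow> complex.
           bij_betw \<Lambda> {1..} (Lambda_set \<alpha> \<mu> a1 a2) \<and>
           (\<exists>\<delta>>0. \<exists>\<rho>>0.
              (\<forall>n\<ge>1. Re (\<Lambda> n) \<ge> \<delta> * cmod (\<Lambda> n)) \<and>
              (\<forall>n\<ge>1. \<forall>m\<ge>1. cmod (\<Lambda> n - \<Lambda> m) \<ge> \<rho> * \<bar>real n - real m\<bar>)) \<and>
           summable (\<lambda>n. 1 / cmod (\<Lambda> (n + 1)))"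
proof -
  define \<nu> where "\<nu> = nu_am \<alpha> \<mu>"
  have nu: "\<nu> \<ge> 0" unfolding \<nu>_def nu_am_def using assms(1-3)
    by (intro mult_nonneg_nonneg) auto
  obtain c where c: "c > 0" "0 < bessel_zero \<nu> 1"
      "\<And>n. n \<ge> 1 \<Longrightarrow> bessel_zero \<nu> (Suc n) - bessel_zero \<nu> n \<ge> c"
    using bessel_zero_facts[OF nu] by blast
  define z where "z = bessel_zero \<nu>"
  define K where "K = ((2 - \<alpha>) / 2)^2"
  have K: "K > 0" using assms(2) by (simp add: K_def)
  define L where "L = lam \<alpha> \<mu>"
  have Lz: "L n = K * (z n)^2" for n by (simp add: L_def lam_def K_def z_def \<nu>_def)
  define c' where "c' = min c (z 1)"
  have c': "c' > 0" "c' \<le> c" "c' \<le> z 1" using c by (auto simp: c'_def z_def)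
  have zlow: "z n \<ge> z 1 + (real n - 1) * c" if "n \<ge> 1" for n
    using that
  proof (induction n rule: dec_induct)
    case base then show ?case by simp
  next
    case (step n)
    have "z (Suc n) - z n \<ge> c" using c(3)[OF step(1)] by (simp add: z_def)
    then show ?case using step(3) by (simp add: algebra_simps)
  qed
  have zc: "z n \<ge> c' * real n" if "n \<ge> 1" for n
  proof -
    have "(real n - 1) * c' \<le> (real n - 1) * c" using that c' by (intro mult_left_mono) auto
    then have "c' * real n \<le> z 1 + (real n - 1) * c" using c' by (simp add: algebra_simps)
    then show ?thesis using zlow[OF that] by linarith
  qed
  define \<rho>2 where "\<rho>2 = K * c * c'"
  have r2: "\<rho>2 > 0" using K c c' by (simp add: \<rho>2_def)
  have stp: "L (Suc n) - L n \<ge> \<rho>2 * real n" if "n \<ge> 1" for n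
  proof -
    have d: "z (Suc n) - z n \<ge> c" using c(3)[OF that] by (simp add: z_def)
    have zn: "z n \<ge> c' * real n" using zc[OF that] .
    have zn0: "c' * real n \<ge> 0" using c' by simp
    have s: "z (Suc n) + z n \<ge> c' * real n" using d zn zn0 c by linarith
    have "L (Suc n) - L n = K * ((z (Suc n) - z n) * (z (Suc n) + z n))"
      by (simp add: Lz power2_eq_square algebra_simps)
    moreover have "(z (Suc n) - z n) * (z (Suc n) + z n) \<ge> c * (c' * real n)"
      using d s c zn0 by (intro mult_mono) auto
    ultimately show ?thesis using K by (simp add: \<rho>2_def mult.assoc mult_left_mono)
  qed
  have L1: "L 1 > 0" using K c(2) by (simp add: Lz z_def)
  define D where "D = a2^2 + 4 * a1"
  have LS: "Lambda_set \<alpha> \<mu> a1 a2 = {complex_of_real (L n) + (eig2 a1 a2 - eig1 a1 a2) | n. n \<ge> 1} \<union> {complex_of_real (L n) | n. n \<ge> 1}"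
    unfolding Lambda_set_def L_def by (simp add: add_diff_eq)
  consider "D > 0" | "D = 0" | "D < 0" by linarith
  then show ?thesis
  proof cases
    case 1
    have e: "eig2 a1 a2 - eig1 a1 a2 = complex_of_real (sqrt D)"
      using 1 unfolding eig1_def eig2_def D_def[symmetric] by (simp add: field_simps)
    show ?thesis unfolding LS e using real_case[OF L1 r2 stp, of "sqrt D"] 1 by simp
  next
    case 2
    have e: "eig2 a1 a2 - eig1 a1 a2 = complex_of_real 0"
      using 2 unfolding eig1_def eig2_def D_def[symmetric] by simp
    show ?thesis unfolding LS e using real_case[OF L1 r2 stp, of 0] by simp
  next
    case 3
    have e: "eig2 a1 a2 - eig1 a1 a2 = Complex 0 (- sqrt (- D))"
      using 3 unfolding eig1_def eig2_def D_def[symmetric] by (simp add: complex_eq_iff)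
    have "sqrt (- D) > 0" using 3 by simp
    then show ?thesis unfolding LS e using complex_case[OF L1 r2 stp] by blast
  qed
qed


end
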